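(* Let $P$ be a program and $G$ an execution graph with $\mathrm{cons}^P(G)$ and $\mathit{BE}(G)$, and let $T$ be a thread and $q$ an iteration index with $\mathit{fail}_G^T(q)$. Then $\mathrm{cons}^P(G-(T,q))$.
   Context: Programs. There are finite sets $\mathit{Register}$, $\mathit{Value}$, $\mathit{Location}$; $\mathit{State}=\mathit{Register}\to\mathit{Value}$; an update is a partial map $\mathit{Register}\rightharpoonup\mathit{Value}$, and $(\sigma\ll\mu)(r)=\mu(r)$ if $r\in\mathrm{Dom}(\mu)$, else $\sigma(r)$. Events are reads $R^m(x)$, writes $W^m(x,v)$, fences $F^m$, error $E$. A program $P$ consists of a finite set $\mathcal T$ of threads, each $T$ with a finite statement sequence $P_T(0),\dots,P_T(|P_T|-1)$. A statement is $\mathtt{step}(\epsilon,\delta)$ with $\epsilon:\mathit{State}\to\mathit{Event}$, $\delta:\mathit{State}\times(\mathit{Value}\cup\{\bot\})\to\mathit{Update}$, or $\mathtt{await}(n,\kappa)$ with $n\in\mathbb N$, $\kappa:\mathit{State}\to\{0,1\}$. Syntactic restriction: if $P_T(k)=\mathtt{await}(n,\cdot)$ then $n\le k$ and no $P_T(k')$ with $k'\in[k-n:k)$ is an await. ($[a:b)=\{a,\dots,b-1\}$.) An execution graph $G$ has a set $G.\mathrm E$ of triples $\langle T,t,e\rangle$ and a partial reads-from map $G.\mathrm{rf}$ from reads to writes. Thread-local semantics: $k_G^T(0)=0$, $\sigma_G^T(0)$ fixed; if $k_G^T(t)\ge|P_T|$ or no triple $\langle T,t,\cdot\rangle$ is in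 $G.\mathrm E$, execution stops ($N_G^T=t$). Otherwise with $S=P_T(k_G^T(t))$: $e_G^T(t)=\epsilon(\sigma_G^T(t))$ for $S=\mathtt{step}(\epsilon,\cdot)$, $F^{\mathrm{rlx}}$ for an await; $v_G^T(t)$ is the value of the write that $G.\mathrm{rf}$ assigns to $\langle T,t,e_G^T(t)\rangle$ if this is a read with defined rf, else $\bot$. For a step: $k_G^T(t+1)=k_G^T(t)+1$; if $e_G^T(t)$ is a read with $v_G^T(t)=\bot$ then $N_G^T=t+1$, $\sigma_G^T(t+1)=\sigma_G^T(t)$, else $\sigma_G^T(t+1)=\sigma_G^T(t)\ll\delta(\sigma_G^T(t),v_G^T(t))$. For $\mathtt{await}(n,\kappa)$: $\sigma_G^T(t+1)=\sigma_G^T(t)$ and $k_G^T(t+1)=k_G^T(t)+1$ if $\kappa(\sigma_G^T(t))=0$, else $k_G^T(t)-n$. $\mathrm{cons}^P(G)$ holds iff $G.\mathrm E=\{\langle T,t,e_G^T(t)\rangle\mid T\in\mathcal T,\ t<N_G^T\}$. Awaits: $\mathit{end}_G^T(0)<\mathit{end}_G^T(1)<\cdots$ enumerate the steps $t$ at which $P_T(k_G^T(t))$ is an await; $\mathit{len}_G^T(q)=n$ where $P_T(k_G^T(\mathit{end}_G^T(q)))=\mathtt{await}(n,\kappa)$; $\mathit{start}_G^T(q)=\mathit{end}_G^T(q)-\mathit{len}_G^T(q)$; $\mathit{fail}_G^T(q)$ iff $\kappa(\sigma_G^T(\mathit{end}_G^T(q)))=1$. Bounded effect. $\delta_G^T(t)=\delta(\sigma_G^T(t),v_G^T(t))$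 if $P_T(k_G^T(t))=\mathtt{step}(\cdot,\delta)$ and not ($e_G^T(t)$ is a read and $v_G^T(t)=\bot$); otherwise the empty update. $\mathit{vis}_G^T(t,u)=\mathrm{Dom}(\delta_G^T(t))\setminus\bigcup_{t<u'<u}\mathrm{Dom}(\delta_G^T(u'))$. $F(\mathtt{step}(\epsilon,\delta))=\{\epsilon,\delta\}$, $F(\mathtt{await}(n,\kappa))=\{\kappa\}$. A function $f$ depends on $R\subseteq\mathit{Register}$ iff there are states $\sigma,\sigma'$ agreeing outside $R$ with $f(\sigma)\neq f(\sigma')$ (for $f=\delta$: $\delta(\sigma,v)\neq\delta(\sigma',v)$ for some $v$). Step $t$ of $T$ register-reads-from to step $u$ ($t\to_{\mathrm{rrf}}u$) iff $u\ge t$ and some $f\in F(P_T(k_G^T(u)))$ depends on $\mathit{vis}_G^T(t,u)$. $\mathit{BE}(G)$ holds iff for all $T$, all $q$ with $\mathit{fail}_G^T(q)$ and all $t\in[\mathit{start}_G^T(q):\mathit{end}_G^T(q))$: $e_G^T(t)$ is not a write, and $t\to_{\mathrm{rrf}}u$ implies $u\in[\mathit{start}_G^T(q):\mathit{end}_G^T(q))$. Deletion. For a failed iteration $q$ of $T$, $G-(T,q)$ is the graph obtained by the partial renaming $r$: $r(\langle U,t,e\rangle)=\langle U,t,e\rangle$ if $U\neq T$ or $t<\mathit{start}_G^T(q)$; $r(\langle T,t,e\rangle)=\langle T,t-(\mathit{len}_G^T(q)+1),e\rangle$ if $t>\mathit{end}_G^T(q)$; undefined (event deleted) otherwise. Then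 $(G-(T,q)).\mathrm E=r(G.\mathrm E)$ and $(G-(T,q)).\mathrm{rf}(e)=r(G.\mathrm{rf}(r^{-1}(e)))$. *)

theory Defs
  imports Main
begin

text \<open>Events: reads R^m(x), writes W^m(x,v), fences F^m, error E.
  The access mode type 'm is kept abstract; the relaxed mode rlx (used for
  the fence event of an await) is an explicit parameter.\<close>

datatype ('l, 'v, 'm) event =
    Read 'm 'l
  | Write 'm 'l 'v
  | Fence 'm
  | Err

type_synonym ('r, 'v) state = "'r \<Rightarrow> 'v"
type_synonym ('r, 'v) update = "'r \<Rightarrow> 'v option"

definition upd :: "('r, 'v) state \<Rightarrow> ('r, 'v) update \<Rightarrow> ('r, 'v) state" where
  "upd \<sigma> \<mu> = (\<lambda>r. case \<mu> r of Some v \<Rightarrow> v | None \<Rightarrow> \<sigma> r)"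

datatype ('r, 'v, 'l, 'm) stmt =
    Step "('r, 'v) state \<Rightarrow> ('l, 'v, 'm) event"
         "('r, 'v) state \<Rightarrow> 'v option \<Rightarrow> ('r, 'v) update"
  | Await nat "('r, 'v) state \<Rightarrow> bool"

fun is_read :: "('l, 'v, 'm) event \<Rightarrow> bool" where
  "is_read (Read _ _) = True"
| "is_read _ = False"

fun is_write :: "('l, 'v, 'm) event \<Rightarrow> bool" where
  "is_write (Write _ _ _) = True"
| "is_write _ = False"

fun val_of_write :: "('l, 'v, 'm) event \<Rightarrow> 'v option" where
  "val_of_write (Write _ _ v) = Some v"
| "val_of_write _ = None"

fun is_await :: "('r, 'v, 'l, 'm) stmt \<Rightarrow> bool" where
  "is_await (Await _ _) = True"
| "is_await _ = False"

text \<open>A program: for each thread (the threads are all elements of the type 't)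
  its statement sequence, and the fixed initial register state.\<close>

record ('t, 'r, 'v, 'l, 'm) prog =
  code :: "'t \<Rightarrow> ('r, 'v, 'l, 'm) stmt list"
  init :: "'t \<Rightarrow> ('r, 'v) state"

definition wf_prog :: "('t, 'r, 'v, 'l, 'm) prog \<Rightarrow> bool" where
  "wf_prog P \<longleftrightarrow> (\<forall>T k. k < length (code P T) \<longrightarrow>
     (case code P T ! k of
        Await n \<kappa> \<Rightarrow> n \<le> k \<and> (\<forall>k'. k - n \<le> k' \<and> k' < k \<longrightarrow> \<not> is_await (code P T ! k'))
      | Step _ _ \<Rightarrow> True))"

type_synonym ('t, 'l, 'v, 'm) triple = "'t \<times> nat \<times> ('l, 'v, 'm) event"

record ('t, 'l, 'v, 'm) graph =
  gE  :: "('t, 'l, 'v, 'm) triple set"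
  grf :: "('t, 'l, 'v, 'm) triple \<Rightarrow> ('t, 'l, 'v, 'm) triple option"

fun evt :: "('t, 'l, 'v, 'm) triple \<Rightarrow> ('l, 'v, 'm) event" where
  "evt (_, _, e) = e"

definition wf_graph :: "('t, 'l, 'v, 'm) graph \<Rightarrow> bool" where
  "wf_graph G \<longleftrightarrow> (\<forall>x y. grf G x = Some y \<longrightarrow>
      x \<in> gE G \<and> is_read (evt x) \<and> y \<in> gE G \<and> is_write (evt y))"

definition cur_event :: "'m \<Rightarrow> ('r, 'v, 'l, 'm) stmt \<Rightarrow> ('r, 'v) state \<Rightarrow> ('l, 'v, 'm) event" where
  "cur_event rlx S \<sigma> = (case S of Step \<epsilon> _ \<Rightarrow> \<epsilon> \<sigma> | Await _ _ \<Rightarrow> Fence rlx)"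

definition read_val :: "('t, 'l, 'v, 'm) graph \<Rightarrow> 't \<Rightarrow> nat \<Rightarrow> ('l, 'v, 'm) event \<Rightarrow> 'v option" where
  "read_val G T t e = (if is_read e then
      (case grf G (T, t, e) of Some w \<Rightarrow> val_of_write (evt w) | None \<Rightarrow> None) else None)"

text \<open>cfg rlx P G T t = (k_G^T(t), sigma_G^T(t)), computed for all t
  (only the values for t below N_G^T are meaningful).\<close>
fun cfg :: "'m \<Rightarrow> ('t, 'r, 'v, 'l, 'm) prog \<Rightarrow> ('t, 'l, 'v, 'm) graph \<Rightarrow> 't \<Rightarrow> nat
            \<Rightarrow> nat \<times> ('r, 'v) state" where
  "cfg rlx P G T 0 = (0, init P T)"
| "cfg rlx P G T (Suc t) =
     (let (k, \<sigma>) = cfg rlx P G T t;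
          S = code P T ! k;
          e = cur_event rlx S \<sigma>;
          v = read_val G T t e
      in case S of
           Step _ \<delta> \<Rightarrow> (k + 1, if is_read e \<and> v = None then \<sigma> else upd \<sigma> (\<delta> \<sigma> v))
         | Await n \<kappa> \<Rightarrow> (if \<kappa> \<sigma> then k - n else k + 1, \<sigma>))"

definition kG where "kG rlx P G T t = fst (cfg rlx P G T t)"
definition sigmaG where "sigmaG rlx P G T t = snd (cfg rlx P G T t)"
definition stmtG where "stmtG rlx P G T t = code P T ! kG rlx P G T t"
definition eG where "eG rlx P G T t = cur_event rlx (stmtG rlx P G T t) (sigmaG rlx P G T t)"
definition vG where "vG rlx P G T t = read_val G T t (eG rlx P G T t)"

definition stopG where
  "stopG rlx P G T t \<longleftrightarrow>
     length (code P T) \<le> kG rlx P G T t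
   \<or> \<not> (\<exists>e. (T, t, e) \<in> gE G)
   \<or> (\<exists>t'. t = Suc t' \<and> \<not> is_await (stmtG rlx P G T t')
          \<and> is_read (eG rlx P G T t') \<and> vG rlx P G T t' = None)"

text \<open>aliveG ... t  iff  t < N_G^T  (N_G^T possibly infinite).\<close>
definition aliveG where
  "aliveG rlx P G T t \<longleftrightarrow> (\<forall>u\<le>t. \<not> stopG rlx P G T u)"

definition consP :: "'m \<Rightarrow> ('t, 'r, 'v, 'l, 'm) prog \<Rightarrow> ('t, 'l, 'v, 'm) graph \<Rightarrow> bool" where
  "consP rlx P G \<longleftrightarrow> gE G = {(T, t, eG rlx P G T t) | T t. aliveG rlx P G T t}"

definition await_step where
  "await_step rlx P G T t \<longleftrightarrow> aliveG rlx P G T t \<and> is_await (stmtG rlx P G T t)"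

text \<open>is_end ... q t  iff  t = end_G^T(q), the q-th (from 0) await step.\<close>
definition is_end where
  "is_end rlx P G T q t \<longleftrightarrow> await_step rlx P G T t \<and>
     card {u. u < t \<and> await_step rlx P G T u} = q"

definition endG where "endG rlx P G T q = (THE t. is_end rlx P G T q t)"

definition lenG where
  "lenG rlx P G T q = (case stmtG rlx P G T (endG rlx P G T q) of Await n _ \<Rightarrow> n | Step _ _ \<Rightarrow> 0)"

definition startG where "startG rlx P G T q = endG rlx P G T q - lenG rlx P G T q"

definition failG where
  "failG rlx P G T q \<longleftrightarrow> (\<exists>t. is_end rlx P G T q t) \<and>
     (case stmtG rlx P G T (endG rlx P G T q) of
        Await _ \<kappa> \<Rightarrow> \<kappa> (sigmaG rlx P G T (endG rlx P G T q))
      | Step _ _ \<Rightarrow> False)"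

definition deltaG where
  "deltaG rlx P G T t = (case stmtG rlx P G T t of
      Step _ \<delta> \<Rightarrow> if is_read (eG rlx P G T t) \<and> vG rlx P G T t = None then Map.empty
                  else \<delta> (sigmaG rlx P G T t) (vG rlx P G T t)
    | Await _ _ \<Rightarrow> Map.empty)"

definition visG where
  "visG rlx P G T t u = dom (deltaG rlx P G T t) - (\<Union>u'\<in>{u'. t < u' \<and> u' < u}. dom (deltaG rlx P G T u'))"

definition depends_on :: "(('r, 'v) state \<Rightarrow> 'b) \<Rightarrow> 'r set \<Rightarrow> bool" where
  "depends_on f R \<longleftrightarrow> (\<exists>\<sigma> \<sigma>'. (\<forall>r. r \<notin> R \<longrightarrow> \<sigma> r = \<sigma>' r) \<and> f \<sigma> \<noteq> f \<sigma>')"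

definition depends_on2 :: "(('r, 'v) state \<Rightarrow> 'w \<Rightarrow> 'b) \<Rightarrow> 'r set \<Rightarrow> bool" where
  "depends_on2 f R \<longleftrightarrow> (\<exists>\<sigma> \<sigma>' v. (\<forall>r. r \<notin> R \<longrightarrow> \<sigma> r = \<sigma>' r) \<and> f \<sigma> v \<noteq> f \<sigma>' v)"

definition stmt_depends :: "('r, 'v, 'l, 'm) stmt \<Rightarrow> 'r set \<Rightarrow> bool" where
  "stmt_depends S R = (case S of
      Step \<epsilon> \<delta> \<Rightarrow> depends_on \<epsilon> R \<or> depends_on2 \<delta> R
    | Await _ \<kappa> \<Rightarrow> depends_on \<kappa> R)"

definition rrf where
  "rrf rlx P G T t u \<longleftrightarrow> t \<le> u \<and> aliveG rlx P G T u \<and>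
     stmt_depends (stmtG rlx P G T u) (visG rlx P G T t u)"

definition BE :: "'m \<Rightarrow> ('t, 'r, 'v, 'l, 'm) prog \<Rightarrow> ('t, 'l, 'v, 'm) graph \<Rightarrow> bool" where
  "BE rlx P G \<longleftrightarrow> (\<forall>T q. failG rlx P G T q \<longrightarrow>
     (\<forall>t. startG rlx P G T q \<le> t \<and> t < endG rlx P G T q \<longrightarrow>
        \<not> is_write (eG rlx P G T t) \<and>
        (\<forall>u. rrf rlx P G T t u \<longrightarrow> startG rlx P G T q \<le> u \<and> u < endG rlx P G T q)))"

definition ren :: "'t \<Rightarrow> nat \<Rightarrow> nat \<Rightarrow> nat \<Rightarrow> ('t, 'l, 'v, 'm) triple \<Rightarrow> ('t, 'l, 'v, 'm) triple option" where
  "ren T s en l x = (case x of (U, t, e) \<Rightarrow>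
      if U \<noteq> T \<or> t < s then Some (U, t, e)
      else if t > en then Some (T, t - (l + 1), e)
      else None)"

text \<open>The inverse of the (injective, surjective) partial renaming ren.\<close>
definition ren_inv :: "'t \<Rightarrow> nat \<Rightarrow> nat \<Rightarrow> ('t, 'l, 'v, 'm) triple \<Rightarrow> ('t, 'l, 'v, 'm) triple" where
  "ren_inv T s l x = (case x of (U, t, e) \<Rightarrow>
      if U \<noteq> T \<or> t < s then (U, t, e) else (T, t + (l + 1), e))"

definition delete_iter :: "'m \<Rightarrow> ('t, 'r, 'v, 'l, 'm) prog \<Rightarrow> ('t, 'l, 'v, 'm) graph \<Rightarrow> 't \<Rightarrow> nat
    \<Rightarrow> ('t, 'l, 'v, 'm) graph" where
  "delete_iter rlx P G T q =
     (let s = startG rlx P G T q; en = endG rlx P G T q; l = lenG rlx P G T q;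
          r = ren T s en l
      in \<lparr> gE = {y. \<exists>x\<in>gE G. r x = Some y},
           grf = (\<lambda>e. Option.bind (grf G (ren_inv T s l e)) r) \<rparr>)"

end

theory Submission
  imports Defs
begin



lemma kG_0[simp]: "kG rlx P G T 0 = 0" and sigmaG_0[simp]: "sigmaG rlx P G T 0 = init P T"
  by (simp_all add: kG_def sigmaG_def)

lemma kG_Suc: "kG rlx P G T (Suc t) = (case stmtG rlx P G T t of Step _ _ \<Rightarrow> kG rlx P G T t + 1
   | Await n \<kappa> \<Rightarrow> if \<kappa> (sigmaG rlx P G T t) then kG rlx P G T t - n else kG rlx P G T t + 1)"
  by (simp add: kG_def sigmaG_def stmtG_def Let_def split: prod.splits stmt.splits)

lemma sigmaG_Suc: "sigmaG rlx P G T (Suc t) = upd (sigmaG rlx P G T t) (deltaG rlx P G T t)"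
proof -
  have e: "upd \<sigma> Map.empty = \<sigma>" for \<sigma> :: "('a,'b) state" by (simp add: upd_def)
  show ?thesis
    by (simp add: kG_def sigmaG_def stmtG_def deltaG_def eG_def vG_def e Let_def split: prod.splits stmt.splits)
qed

lemma kG_le: "kG rlx P G T t \<le> t"
  by (induction t) (auto simp: kG_Suc split: stmt.splits)

lemma alive_mono: "aliveG rlx P G T t \<Longrightarrow> u \<le> t \<Longrightarrow> aliveG rlx P G T u"
  by (auto simp: aliveG_def)

lemma alive_Suc: "aliveG rlx P G T (Suc t) \<longleftrightarrow> aliveG rlx P G T t \<and> \<not> stopG rlx P G T (Suc t)"
  by (auto simp: aliveG_def le_Suc_eq)

lemma alive_0: "aliveG rlx P G T 0 \<longleftrightarrow> \<not> stopG rlx P G T 0"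
  by (auto simp: aliveG_def)

lemma vis_Suc: "t0 < u \<Longrightarrow> visG rlx P G T t0 (Suc u) = visG rlx P G T t0 u - dom (deltaG rlx P G T u)"
  by (auto simp: visG_def less_Suc_eq)

lemma vis_self: "visG rlx P G T u (Suc u) = dom (deltaG rlx P G T u)"
  by (auto simp: visG_def)

lemma upd_other: "r \<notin> dom \<mu> \<Longrightarrow> upd \<sigma> \<mu> r = \<sigma> r"
  by (auto simp: upd_def split: option.splits)
lemma upd_dom: "r \<in> dom \<mu> \<Longrightarrow> upd \<sigma> \<mu> r = upd \<sigma>' \<mu> r"
  by (auto simp: upd_def split: option.splits)

lemma lemmaB: "a \<le> u \<Longrightarrow> r \<notin> (\<Union>t0\<in>{a..<u}. visG rlx P G T t0 u) \<Longrightarrow>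
   sigmaG rlx P G T u r = sigmaG rlx P G T a r"
proof (induction u)
  case 0 then show ?case by simp
next
  case (Suc u)
  show ?case
  proof (cases "a = Suc u")
    case True then show ?thesis by simp
  next
    case False
    hence au: "a \<le> u" using Suc.prems by simp
    have "u \<in> {a..<Suc u}" using au by simp
    hence nd: "r \<notin> dom (deltaG rlx P G T u)"
      using Suc.prems(2) vis_self[of rlx P G T u] by blast
    have "r \<notin> (\<Union>t0\<in>{a..<u}. visG rlx P G T t0 u)"
    proof
      assume "r \<in> (\<Union>t0\<in>{a..<u}. visG rlx P G T t0 u)"
      then obtain t0 where "t0 \<in> {a..<u}" "r \<in> visG rlx P G T t0 u" by auto
      then show False using Suc.prems(2) nd vis_Suc[of t0 u rlx P G T] by auto
    qed
    then show ?thesis using Suc.IH au nd by (simp add: sigmaG_Suc upd_other)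
  qed
qed

lemma ndep_eq: "\<not> depends_on f R \<Longrightarrow> (\<And>r. r \<notin> R \<Longrightarrow> \<sigma> r = \<sigma>' r) \<Longrightarrow> f \<sigma> = f \<sigma>'"
  unfolding depends_on_def by blast
lemma ndep2_eq: "\<not> depends_on2 f R \<Longrightarrow> (\<And>r. r \<notin> R \<Longrightarrow> \<sigma> r = \<sigma>' r) \<Longrightarrow> f \<sigma> v = f \<sigma>' v"
  unfolding depends_on2_def by blast

lemma dep_union: "finite I \<Longrightarrow> (\<forall>i\<in>I. \<not> depends_on f (R i)) \<Longrightarrow> \<not> depends_on f (\<Union>i\<in>I. R i)"
proof (induction I rule: finite_induct)
  case empty then show ?case unfolding depends_on_def by (metis UN_empty empty_iff ext)
next
  case (insert x F)
  show ?case
  proof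
    assume "depends_on f (\<Union>i\<in>insert x F. R i)"
    then obtain \<sigma> \<sigma>' where a: "\<forall>r. r \<notin> (\<Union>i\<in>insert x F. R i) \<longrightarrow> \<sigma> r = \<sigma>' r" "f \<sigma> \<noteq> f \<sigma>'"
      unfolding depends_on_def by blast
    define \<sigma>'' where "\<sigma>'' = (\<lambda>r. if r \<in> R x then \<sigma>' r else \<sigma> r)"
    have "\<not> depends_on f (R x)" using insert.prems by simp
    hence "f \<sigma> = f \<sigma>''" unfolding \<sigma>''_def
      by (rule ndep_eq) auto
    moreover have "\<not> depends_on f (\<Union>i\<in>F. R i)" using insert.IH insert.prems by simp
    hence "f \<sigma>'' = f \<sigma>'" by (rule ndep_eq) (use a(1) in \<open>auto simp: \<sigma>''_def\<close>)
    ultimately show False using a by simp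
  qed
qed

lemma dep2_union: "finite I \<Longrightarrow> (\<forall>i\<in>I. \<not> depends_on2 f (R i)) \<Longrightarrow> \<not> depends_on2 f (\<Union>i\<in>I. R i)"
proof (induction I rule: finite_induct)
  case empty then show ?case unfolding depends_on2_def by (metis UN_empty empty_iff ext)
next
  case (insert x F)
  show ?case
  proof
    assume "depends_on2 f (\<Union>i\<in>insert x F. R i)"
    then obtain \<sigma> \<sigma>' v where a: "\<forall>r. r \<notin> (\<Union>i\<in>insert x F. R i) \<longrightarrow> \<sigma> r = \<sigma>' r" "f \<sigma> v \<noteq> f \<sigma>' v"
      unfolding depends_on2_def by blast
    define \<sigma>'' where "\<sigma>'' = (\<lambda>r. if r \<in> R x then \<sigma>' r else \<sigma> r)"
    have "\<not> depends_on2 f (R x)" using insert.prems by simp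
    hence "f \<sigma> v = f \<sigma>'' v" unfolding \<sigma>''_def
      by (rule ndep2_eq) auto
    moreover have "\<not> depends_on2 f (\<Union>i\<in>F. R i)" using insert.IH insert.prems by simp
    hence "f \<sigma>'' v = f \<sigma>' v" by (rule ndep2_eq) (use a(1) in \<open>auto simp: \<sigma>''_def\<close>)
    ultimately show False using a by simp
  qed
qed

lemma sdep_union: "\<not> stmt_depends S (\<Union>i\<in>I. R i)" if "finite I" "\<forall>i\<in>I. \<not> stmt_depends S (R i)"
proof (cases S)
  case (Step x11 x12) thus ?thesis using dep_union[of I x11 R] dep2_union[of I x12 R] that by (simp add: stmt_depends_def)
next
  case (Await x21 x22) thus ?thesis using dep_union[of I x22 R] that by (simp add: stmt_depends_def)
qed

lemma is_end_unique: "is_end rlx P G T q t1 \<Longrightarrow> is_end rlx P G T q t2 \<Longrightarrow> t1 = t2"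
proof (rule ccontr)
  assume a: "is_end rlx P G T q t1" "is_end rlx P G T q t2" "t1 \<noteq> t2"
  have *: "t1 < t2 \<Longrightarrow> is_end rlx P G T q t1 \<Longrightarrow> is_end rlx P G T q t2 \<Longrightarrow> False" for t1 t2
  proof -
    assume b: "t1 < t2" "is_end rlx P G T q t1" "is_end rlx P G T q t2"
    have "{u. u < t1 \<and> await_step rlx P G T u} \<subset> {u. u < t2 \<and> await_step rlx P G T u}"
      using b by (auto simp: is_end_def)
    hence "card {u. u < t1 \<and> await_step rlx P G T u} < card {u. u < t2 \<and> await_step rlx P G T u}"
      by (intro psubset_card_mono) auto
    thus False using b by (simp add: is_end_def)
  qed
  show False using a *[of t1 t2] *[of t2 t1] by (cases "t1 < t2") auto
qed




locale L6 =
  fixes rlx :: 'm and P :: "('t, 'r, 'v, 'l, 'm) prog" and G :: "('t, 'l, 'v, 'm) graph"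
    and T :: 't and q :: nat
  assumes wfp: "wf_prog P" and wfg: "wf_graph G" and cons: "consP rlx P G"
    and be: "BE rlx P G" and fail: "failG rlx P G T q"
begin

abbreviation "EN \<equiv> endG rlx P G T q"
abbreviation "NN \<equiv> lenG rlx P G T q"
abbreviation "SS \<equiv> startG rlx P G T q"
abbreviation "G2 \<equiv> delete_iter rlx P G T q"
abbreviation "KK \<equiv> kG rlx P G T EN"

lemma end_is: "is_end rlx P G T q EN"
proof -
  obtain t where "is_end rlx P G T q t" using fail by (auto simp: failG_def)
  moreover have "endG rlx P G T q = t" if "is_end rlx P G T q t" for t
    unfolding endG_def by (rule the_equality[of "is_end rlx P G T q" t, OF that]) (rule is_end_unique[OF _ that])
  ultimately show ?thesis by simp
qed

lemma alive_EN: "aliveG rlx P G T EN"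
  using end_is by (simp add: is_end_def await_step_def)

lemma stmt_EN_ex: "\<exists>\<kappa>. stmtG rlx P G T EN = Await NN \<kappa> \<and> \<kappa> (sigmaG rlx P G T EN)"
  using fail by (auto simp: failG_def lenG_def split: stmt.splits)

definition "KAP = (SOME \<kappa>. stmtG rlx P G T EN = Await NN \<kappa> \<and> \<kappa> (sigmaG rlx P G T EN))"

lemma stmt_EN: "stmtG rlx P G T EN = Await NN KAP" and kap: "KAP (sigmaG rlx P G T EN)"
  using someI_ex[OF stmt_EN_ex] unfolding KAP_def by auto

lemma alive_lt: "aliveG rlx P G T t \<Longrightarrow> kG rlx P G T t < length (code P T)"
  by (auto simp: aliveG_def stopG_def)

lemma KK_lt: "KK < length (code P T)" using alive_lt alive_EN by blast

lemma codeKK: "code P T ! KK = Await NN KAP" using stmt_EN by (simp add: stmtG_def)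

lemma wfK0: "case code P T ! KK of Await n \<kappa> \<Rightarrow> n \<le> KK \<and> (\<forall>k'. KK - n \<le> k' \<and> k' < KK \<longrightarrow> \<not> is_await (code P T ! k'))
      | Step _ _ \<Rightarrow> True" using wfp KK_lt unfolding wf_prog_def by blast
lemma wfK: "NN \<le> KK" "\<And>k'. KK - NN \<le> k' \<Longrightarrow> k' < KK \<Longrightarrow> \<not> is_await (code P T ! k')"
  using wfK0 codeKK by auto

lemma NN_le: "NN \<le> EN" using wfK(1) kG_le[of rlx P G T EN] by simp

lemma SS_eq: "SS = EN - NN" by (simp add: startG_def)

lemma backk: "j \<le> NN \<Longrightarrow> kG rlx P G T (EN - j) = KK - j"
proof (induction j)
  case 0 then show ?case by simp
next
  case (Suc j)
  define t where "t = EN - Suc j"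
  have jl: "j < NN" using Suc by simp
  have st: "Suc t = EN - j" using jl NN_le by (simp add: t_def)
  have IH: "kG rlx P G T (Suc t) = KK - j" using Suc.IH jl st by simp
  have al: "aliveG rlx P G T t" using alive_mono[OF alive_EN, of t] t_def by simp
  define k where "k = kG rlx P G T t"
  have klt: "k < length (code P T)" using alive_lt[OF al] k_def by simp
  show ?case
  proof (cases "code P T ! k")
    case (Step x y)
    then have "kG rlx P G T (Suc t) = k + 1" by (simp add: kG_Suc stmtG_def k_def)
    then show ?thesis using IH jl wfK(1) t_def k_def by simp
  next
    case (Await n' \<kappa>')
    have "case code P T ! k of Await n \<kappa> \<Rightarrow> n \<le> k \<and> (\<forall>k'. k - n \<le> k' \<and> k' < k \<longrightarrow> \<not> is_await (code P T ! k'))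
      | Step _ _ \<Rightarrow> True" using wfp klt unfolding wf_prog_def by blast
    then have wk: "n' \<le> k" "\<And>k'. k - n' \<le> k' \<Longrightarrow> k' < k \<Longrightarrow> \<not> is_await (code P T ! k')"
      using Await by auto
    have ks: "kG rlx P G T (Suc t) = (if \<kappa>' (sigmaG rlx P G T t) then k - n' else k + 1)"
      using Await by (simp add: kG_Suc stmtG_def k_def)
    show ?thesis
    proof (cases "\<kappa>' (sigmaG rlx P G T t)")
      case False
      then have "k = KK - Suc j" using ks IH jl wfK(1) by simp
      then have "\<not> is_await (code P T ! k)" using wfK jl by simp
      then show ?thesis using Await by simp
    next
      case True
      then have kn: "k - n' = KK - j" using ks IH by simp
      have False
      proof (cases "k > KK")
        case True
        then show False using wk(2)[of KK] kn codeKK wk(1) by simp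
      next
        case False
        show False
        proof (cases "k < KK")
          case True
          then have "\<not> is_await (code P T ! k)" using wfK kn jl wk(1) by (intro wfK(2)) auto
          then show False using Await by simp
        next
          case False
          then have "k = KK" using \<open>\<not> k > KK\<close> by simp
          then have "n' = NN" using Await codeKK by simp
          then show False using kn \<open>k = KK\<close> wfK(1) jl by simp
        qed
      qed
      then show ?thesis ..
    qed
  qed
qed

lemma kG_SS: "kG rlx P G T SS = KK - NN" using backk[of NN] SS_eq by simp

lemma kG_SucEN: "kG rlx P G T (Suc EN) = KK - NN"
  using stmt_EN kap by (simp add: kG_Suc startG_def)

lemma delta_EN: "deltaG rlx P G T EN = Map.empty"
  using stmt_EN by (simp add: deltaG_def)

lemma sigma_SucEN: "sigmaG rlx P G T (Suc EN) = sigmaG rlx P G T EN"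
  by (simp add: sigmaG_Suc delta_EN upd_def)

lemma gE_G: "x \<in> gE G \<longleftrightarrow> (\<exists>U t. x = (U, t, eG rlx P G U t) \<and> aliveG rlx P G U t)"
  using cons by (auto simp: consP_def)

lemma eG_EN: "eG rlx P G T EN = Fence rlx"
  using stmt_EN by (simp add: eG_def cur_event_def)

lemma no_write: "SS \<le> t \<Longrightarrow> t \<le> EN \<Longrightarrow> \<not> is_write (eG rlx P G T t)"
proof (cases "t = EN")
  case True then show ?thesis using eG_EN by simp
next
  case False
  assume "SS \<le> t" "t \<le> EN"
  hence "SS \<le> t \<and> t < EN" using False by simp
  moreover have "\<forall>t. SS \<le> t \<and> t < EN \<longrightarrow> \<not> is_write (eG rlx P G T t) \<and>
        (\<forall>u. rrf rlx P G T t u \<longrightarrow> SS \<le> u \<and> u < EN)"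
    using be fail unfolding BE_def by blast
  ultimately show ?thesis by blast
qed

lemma grf_G2: "grf G2 e = Option.bind (grf G (ren_inv T SS NN e)) (ren T SS EN NN)"
  by (simp add: delete_iter_def Let_def)

lemma gE_G2: "gE G2 = {y. \<exists>x\<in>gE G. ren T SS EN NN x = Some y}"
  by (simp add: delete_iter_def Let_def)

lemma ren_write: "w \<in> gE G \<Longrightarrow> is_write (evt w) \<Longrightarrow> \<exists>w'. ren T SS EN NN w = Some w' \<and> evt w' = evt w"
proof -
  assume a: "w \<in> gE G" "is_write (evt w)"
  then obtain U t where w: "w = (U, t, eG rlx P G U t)" unfolding gE_G by blast
  have "\<not> (U = T \<and> SS \<le> t \<and> t \<le> EN)" using no_write a(2) w by auto
  then show ?thesis using w unfolding ren_def by auto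
qed

lemma read_val_G2: "read_val G2 U t e =
   (if U \<noteq> T \<or> t < SS then read_val G U t e else read_val G T (t + (NN + 1)) e)"
proof -
  have ri: "ren_inv T SS NN (U, t, e) = (if U \<noteq> T \<or> t < SS then (U, t, e) else (T, t + (NN + 1), e))"
    by (simp add: ren_inv_def)
  have gen: "read_val G2 U t e = read_val G U' t' e" if "ren_inv T SS NN (U, t, e) = (U', t', e)" for U' t'
  proof (cases "grf G (U', t', e)")
    case None then show ?thesis using that by (simp add: read_val_def grf_G2)
  next
    case (Some w)
    then have "w \<in> gE G \<and> is_write (evt w)" using wfg unfolding wf_graph_def by blast
    then have "w \<in> gE G" "is_write (evt w)" by auto
    then obtain w' where "ren T SS EN NN w = Some w'" "evt w' = evt w" using ren_write by blast
    then show ?thesis using Some that by (simp add: read_val_def grf_G2)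
  qed
  show ?thesis using gen ri by (cases "U \<noteq> T \<or> t < SS") auto
qed

lemma memb_G2: "(U, t, e) \<in> gE G2 \<longleftrightarrow>
   (if U \<noteq> T \<or> t < SS then (U, t, e) \<in> gE G else (T, t + (NN + 1), e) \<in> gE G)"
proof -
  have se: "SS + NN = EN" using SS_eq NN_le by simp
  have "ren T SS EN NN x = Some (U, t, e) \<longleftrightarrow>
        x = (if U \<noteq> T \<or> t < SS then (U, t, e) else (T, t + (NN + 1), e))" for x
    using se by (cases x) (auto simp: ren_def)
  then show ?thesis unfolding gE_G2 by auto
qed

end



context L6 begin

lemma same_at:
  assumes "cfg rlx P G2 U t = cfg rlx P G U t'" "\<And>e. read_val G2 U t e = read_val G U t' e"
  shows "kG rlx P G2 U t = kG rlx P G U t'" "sigmaG rlx P G2 U t = sigmaG rlx P G U t'"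
    "stmtG rlx P G2 U t = stmtG rlx P G U t'" "eG rlx P G2 U t = eG rlx P G U t'"
    "vG rlx P G2 U t = vG rlx P G U t'" "deltaG rlx P G2 U t = deltaG rlx P G U t'"
proof -
  show 1: "kG rlx P G2 U t = kG rlx P G U t'" "sigmaG rlx P G2 U t = sigmaG rlx P G U t'"
    "stmtG rlx P G2 U t = stmtG rlx P G U t'" using assms by (simp_all add: kG_def sigmaG_def stmtG_def)
  show 2: "eG rlx P G2 U t = eG rlx P G U t'" using 1 by (simp add: eG_def)
  show 3: "vG rlx P G2 U t = vG rlx P G U t'" using 2 assms by (simp add: vG_def)
  show "deltaG rlx P G2 U t = deltaG rlx P G U t'" unfolding deltaG_def 1 2 3 by (rule refl)
qed

lemma cfg_pre: "t \<le> SS \<Longrightarrow> cfg rlx P G2 T t = cfg rlx P G T t"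
  by (induction t) (simp_all add: Let_def read_val_G2)

lemma cfg_oth: "U \<noteq> T \<Longrightarrow> cfg rlx P G2 U t = cfg rlx P G U t"
  by (induction t) (simp_all add: Let_def read_val_G2)

lemma same_pre: "t < SS \<Longrightarrow>
   kG rlx P G2 T t = kG rlx P G T t \<and> stmtG rlx P G2 T t = stmtG rlx P G T t \<and>
   eG rlx P G2 T t = eG rlx P G T t \<and> vG rlx P G2 T t = vG rlx P G T t"
proof -
  assume t: "t < SS"
  have "cfg rlx P G2 T t = cfg rlx P G T t" using cfg_pre t by simp
  moreover have "\<And>e. read_val G2 T t e = read_val G T t e" using read_val_G2 t by simp
  ultimately show ?thesis using same_at[of T t t] by simp
qed

lemma same_pre_le: "t \<le> SS \<Longrightarrow> kG rlx P G2 T t = kG rlx P G T t \<and> sigmaG rlx P G2 T t = sigmaG rlx P G T t"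
  using cfg_pre by (simp add: kG_def sigmaG_def)

lemma same_oth: "U \<noteq> T \<Longrightarrow>
   kG rlx P G2 U t = kG rlx P G U t \<and> stmtG rlx P G2 U t = stmtG rlx P G U t \<and>
   eG rlx P G2 U t = eG rlx P G U t \<and> vG rlx P G2 U t = vG rlx P G U t"
proof -
  assume t: "U \<noteq> T"
  have "cfg rlx P G2 U t = cfg rlx P G U t" using cfg_oth t by simp
  moreover have "\<And>e. read_val G2 U t e = read_val G U t e" using read_val_G2 t by simp
  ultimately show ?thesis using same_at[of U t t] by simp
qed

lemma stop_pre: "t < SS \<Longrightarrow> stopG rlx P G2 T t \<longleftrightarrow> stopG rlx P G T t"
proof -
  assume t: "t < SS"
  have a: "(\<exists>e. (T, t, e) \<in> gE G2) \<longleftrightarrow> (\<exists>e. (T, t, e) \<in> gE G)" using memb_G2 t by simp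
  have b: "(\<exists>t'. t = Suc t' \<and> \<not> is_await (stmtG rlx P G2 T t') \<and> is_read (eG rlx P G2 T t') \<and> vG rlx P G2 T t' = None)
     \<longleftrightarrow> (\<exists>t'. t = Suc t' \<and> \<not> is_await (stmtG rlx P G T t') \<and> is_read (eG rlx P G T t') \<and> vG rlx P G T t' = None)"
    using same_pre t by auto
  show ?thesis unfolding stopG_def using a b same_pre[OF t] by simp
qed

lemma stop_oth: "U \<noteq> T \<Longrightarrow> stopG rlx P G2 U t \<longleftrightarrow> stopG rlx P G U t"
proof -
  assume t: "U \<noteq> T"
  have a: "(\<exists>e. (U, t, e) \<in> gE G2) \<longleftrightarrow> (\<exists>e. (U, t, e) \<in> gE G)" using memb_G2 t by simp
  show ?thesis unfolding stopG_def using a same_oth[OF t] by simp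
qed

lemma alive_pre: "t < SS \<Longrightarrow> aliveG rlx P G2 T t \<longleftrightarrow> aliveG rlx P G T t"
  unfolding aliveG_def using stop_pre by auto

lemma alive_oth: "U \<noteq> T \<Longrightarrow> aliveG rlx P G2 U t \<longleftrightarrow> aliveG rlx P G U t"
  unfolding aliveG_def using stop_oth by auto

definition "VV u = (\<Union>t0\<in>{SS..<EN}. visG rlx P G T t0 u)"

lemma ndep: "aliveG rlx P G T u \<Longrightarrow> EN < u \<Longrightarrow> \<not> stmt_depends (stmtG rlx P G T u) (VV u)"
proof -
  assume a: "aliveG rlx P G T u" "EN < u"
  have bb: "\<forall>t. SS \<le> t \<and> t < EN \<longrightarrow> \<not> is_write (eG rlx P G T t) \<and>
        (\<forall>u. rrf rlx P G T t u \<longrightarrow> SS \<le> u \<and> u < EN)"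
    using be fail unfolding BE_def by blast
  have "\<forall>t0\<in>{SS..<EN}. \<not> stmt_depends (stmtG rlx P G T u) (visG rlx P G T t0 u)"
  proof
    fix t0 assume "t0 \<in> {SS..<EN}"
    then have "SS \<le> t0 \<and> t0 < EN" by simp
    then have "\<forall>u. rrf rlx P G T t0 u \<longrightarrow> SS \<le> u \<and> u < EN" using bb by blast
    then have "\<not> rrf rlx P G T t0 u" using a(2) by auto
    moreover have "t0 \<le> u" using \<open>SS \<le> t0 \<and> t0 < EN\<close> a(2) by simp
    ultimately show "\<not> stmt_depends (stmtG rlx P G T u) (visG rlx P G T t0 u)"
      using a(1) unfolding rrf_def by blast
  qed
  then show ?thesis unfolding VV_def by (intro sdep_union) simp_all
qed

lemma VV_Suc: "EN \<le> u \<Longrightarrow> VV (Suc u) = VV u - dom (deltaG rlx P G T u)"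
proof -
  assume u: "EN \<le> u"
  have "\<forall>t0\<in>{SS..<EN}. visG rlx P G T t0 (Suc u) = visG rlx P G T t0 u - dom (deltaG rlx P G T u)"
  proof
    fix t0 assume "t0 \<in> {SS..<EN}"
    then show "visG rlx P G T t0 (Suc u) = visG rlx P G T t0 u - dom (deltaG rlx P G T u)"
      using vis_Suc[of t0 u rlx P G T] u by auto
  qed
  then show ?thesis unfolding VV_def by auto
qed

definition "Inv t \<longleftrightarrow> kG rlx P G2 T t = kG rlx P G T (t + (NN + 1)) \<and>
   (\<forall>r. r \<notin> VV (t + (NN + 1)) \<longrightarrow> sigmaG rlx P G2 T t r = sigmaG rlx P G T (t + (NN + 1)) r)"

lemma SSNN: "SS + (NN + 1) = Suc EN" using SS_eq NN_le by simp

lemma Inv_base: "Inv SS"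
proof -
  have k: "kG rlx P G2 T SS = kG rlx P G T (Suc EN)" using same_pre_le kG_SS kG_SucEN by simp
  have "VV (Suc EN) = VV EN" using VV_Suc[of EN] delta_EN by simp
  then have "sigmaG rlx P G2 T SS r = sigmaG rlx P G T (Suc EN) r" if "r \<notin> VV (Suc EN)" for r
    using that same_pre_le[of SS] sigma_SucEN lemmaB[of SS EN r rlx P G T] SS_eq
    unfolding VV_def by simp
  then show ?thesis unfolding Inv_def SSNN using k by simp
qed

lemma Inv_step:
  assumes I: "Inv t" and t: "SS \<le> t" and al: "aliveG rlx P G T (t + (NN + 1))"
  shows "stmtG rlx P G2 T t = stmtG rlx P G T (t + (NN + 1))"
    "eG rlx P G2 T t = eG rlx P G T (t + (NN + 1))"
    "vG rlx P G2 T t = vG rlx P G T (t + (NN + 1))"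
    "Inv (Suc t)"
proof -
  define u where "u = t + (NN + 1)"
  have uEN: "EN < u" using t SSNN u_def by simp
  define S where "S = stmtG rlx P G T u"
  define \<sigma> where "\<sigma> = sigmaG rlx P G T u"
  define \<sigma>' where "\<sigma>' = sigmaG rlx P G2 T t"
  have al': "aliveG rlx P G T u" using al u_def by simp
  have nd: "\<not> stmt_depends S (VV u)" unfolding S_def by (rule ndep[OF al' uEN])
  have ag: "\<And>r. r \<notin> VV u \<Longrightarrow> \<sigma>' r = \<sigma> r" using I unfolding Inv_def \<sigma>_def \<sigma>'_def u_def by simp
  have ag': "\<And>r. r \<notin> VV u \<Longrightarrow> \<sigma> r = \<sigma>' r" using ag by simp
  have st: "stmtG rlx P G2 T t = S" using I unfolding Inv_def S_def u_def stmtG_def by simp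
  have ev: "eG rlx P G2 T t = eG rlx P G T u"
  proof (cases S)
    case (Step \<epsilon> \<delta>)
    then have "\<not> depends_on \<epsilon> (VV u)" using nd by (simp add: stmt_depends_def)
    then have "\<epsilon> \<sigma>' = \<epsilon> \<sigma>" by (rule ndep_eq[OF _ ag])
    then show ?thesis using st Step unfolding eG_def S_def \<sigma>_def \<sigma>'_def cur_event_def by simp
  next
    case (Await n \<kappa>)
    then show ?thesis using st unfolding eG_def S_def cur_event_def by simp
  qed
  have vv: "vG rlx P G2 T t = vG rlx P G T u" using ev t read_val_G2 unfolding vG_def u_def by simp
  have dl: "deltaG rlx P G2 T t = deltaG rlx P G T u"
  proof (cases S)
    case (Step \<epsilon> \<delta>)
    then have "\<not> depends_on2 \<delta> (VV u)" using nd by (simp add: stmt_depends_def)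
    then have "\<delta> \<sigma>' v = \<delta> \<sigma> v" for v by (rule ndep2_eq[OF _ ag])
    then show ?thesis using st Step ev vv unfolding deltaG_def S_def \<sigma>_def \<sigma>'_def by simp
  next
    case (Await n \<kappa>)
    then show ?thesis using st unfolding deltaG_def S_def by simp
  qed
  have kk: "kG rlx P G2 T (Suc t) = kG rlx P G T (Suc u)"
  proof (cases S)
    case (Step \<epsilon> \<delta>)
    then show ?thesis using st I unfolding Inv_def S_def u_def by (simp add: kG_Suc)
  next
    case (Await n \<kappa>)
    then have "\<not> depends_on \<kappa> (VV u)" using nd by (simp add: stmt_depends_def)
    then have "\<kappa> \<sigma>' = \<kappa> \<sigma>" by (rule ndep_eq[OF _ ag])
    then show ?thesis using st I Await unfolding Inv_def S_def u_def \<sigma>_def \<sigma>'_def by (simp add: kG_Suc)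
  qed
  have ss: "sigmaG rlx P G2 T (Suc t) r = sigmaG rlx P G T (Suc u) r" if "r \<notin> VV (Suc u)" for r
  proof (cases "r \<in> dom (deltaG rlx P G T u)")
    case True then show ?thesis by (simp add: sigmaG_Suc dl upd_dom)
  next
    case False
    then have "r \<notin> VV u" using that VV_Suc[of u] uEN by auto
    then show ?thesis using False ag by (simp add: sigmaG_Suc dl upd_other \<sigma>_def \<sigma>'_def)
  qed
  show "stmtG rlx P G2 T t = stmtG rlx P G T (t + (NN + 1))" using st S_def u_def by simp
  show "eG rlx P G2 T t = eG rlx P G T (t + (NN + 1))" using ev u_def by simp
  show "vG rlx P G2 T t = vG rlx P G T (t + (NN + 1))" using vv u_def by simp
  show "Inv (Suc t)" unfolding Inv_def using kk ss u_def by simp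
qed

end



context L6 begin

lemma Jd: "aliveG rlx P G T (EN + d) \<Longrightarrow> Inv (SS + d)"
proof (induction d)
  case 0 then show ?case using Inv_base by simp
next
  case (Suc d)
  have a: "aliveG rlx P G T (EN + d)" using alive_mono[OF Suc.prems] by simp
  have b: "aliveG rlx P G T (SS + d + (NN + 1))" using Suc.prems SSNN by (simp add: add.commute add.left_commute)
  have "Inv (Suc (SS + d))" using Inv_step(4)[OF Suc.IH[OF a] _ b] by simp
  then show ?case by simp
qed

lemma Inv_ge: "SS \<le> t \<Longrightarrow> aliveG rlx P G T (t + NN) \<Longrightarrow> Inv t"
proof -
  assume a: "SS \<le> t" "aliveG rlx P G T (t + NN)"
  have "EN + (t - SS) = t + NN" using SSNN a(1) by arith
  then show ?thesis using Jd[of "t - SS"] a by simp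
qed

lemma step_ge: assumes "SS \<le> t" "aliveG rlx P G T (t + (NN + 1))"
  shows "stmtG rlx P G2 T t = stmtG rlx P G T (t + (NN + 1))"
    "eG rlx P G2 T t = eG rlx P G T (t + (NN + 1))"
    "vG rlx P G2 T t = vG rlx P G T (t + (NN + 1))"
proof -
  have "Inv t" using Inv_ge[OF assms(1)] alive_mono[OF assms(2)] by simp
  then show "stmtG rlx P G2 T t = stmtG rlx P G T (t + (NN + 1))"
    "eG rlx P G2 T t = eG rlx P G T (t + (NN + 1))"
    "vG rlx P G2 T t = vG rlx P G T (t + (NN + 1))"
    using Inv_step(1-3)[OF _ assms(1) assms(2)] by simp_all
qed

lemma stop_post: assumes t: "SS \<le> t" and al: "aliveG rlx P G T (t + NN)"
  shows "stopG rlx P G2 T t \<longleftrightarrow> stopG rlx P G T (t + (NN + 1))"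
proof -
  have I: "Inv t" using Inv_ge t al by simp
  have k: "kG rlx P G2 T t = kG rlx P G T (t + (NN + 1))" using I by (simp add: Inv_def)
  have m: "(\<exists>e. (T, t, e) \<in> gE G2) \<longleftrightarrow> (\<exists>e. (T, t + (NN + 1), e) \<in> gE G)" using memb_G2 t by simp
  have c: "(\<exists>t'. t = Suc t' \<and> \<not> is_await (stmtG rlx P G2 T t') \<and> is_read (eG rlx P G2 T t') \<and> vG rlx P G2 T t' = None)
     \<longleftrightarrow> (\<exists>t'. t + (NN + 1) = Suc t' \<and> \<not> is_await (stmtG rlx P G T t') \<and> is_read (eG rlx P G T t') \<and> vG rlx P G T t' = None)"
  proof (cases "t = SS")
    case True
    have r: "\<not> (\<exists>t'. t + (NN + 1) = Suc t' \<and> \<not> is_await (stmtG rlx P G T t') \<and> is_read (eG rlx P G T t') \<and> vG rlx P G T t' = None)"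
      using True SSNN stmt_EN by simp
    have "aliveG rlx P G T SS" using alive_mono[OF alive_EN] SS_eq by simp
    then have ns: "\<not> stopG rlx P G T SS" by (simp add: aliveG_def)
    have "\<not> (\<exists>t'. t = Suc t' \<and> \<not> is_await (stmtG rlx P G2 T t') \<and> is_read (eG rlx P G2 T t') \<and> vG rlx P G2 T t' = None)"
    proof
      assume "\<exists>t'. t = Suc t' \<and> \<not> is_await (stmtG rlx P G2 T t') \<and> is_read (eG rlx P G2 T t') \<and> vG rlx P G2 T t' = None"
      then obtain t' where h: "t = Suc t'" "\<not> is_await (stmtG rlx P G2 T t')" "is_read (eG rlx P G2 T t')" "vG rlx P G2 T t' = None" by blast
      have "t' < SS" using h(1) True by simp
      then have "\<not> is_await (stmtG rlx P G T t')" "is_read (eG rlx P G T t')" "vG rlx P G T t' = None"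
        using same_pre[of t'] h(2-4) by simp_all
      moreover have "SS = Suc t'" using h(1) True by simp
      ultimately have "stopG rlx P G T SS" unfolding stopG_def by blast
      then show False using ns by simp
    qed
    then show ?thesis using r by blast
  next
    case False
    then obtain t' where t': "t = Suc t'" "SS \<le> t'" using t by (cases t) auto
    have "aliveG rlx P G T (t' + (NN + 1))" using al t' by simp
    note sg = step_ge[OF t'(2) this]
    show ?thesis using sg t' by simp
  qed
  show ?thesis unfolding stopG_def using k m c by simp
qed

lemma alive_post: "aliveG rlx P G2 T (SS + d) \<longleftrightarrow> aliveG rlx P G T (Suc EN + d)"
proof (induction d)
  case 0
  have sp: "stopG rlx P G2 T SS \<longleftrightarrow> stopG rlx P G T (Suc EN)"
    using stop_post[of SS] SSNN alive_EN SS_eq NN_le by simp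
  have aG: "aliveG rlx P G T (Suc EN) \<longleftrightarrow> \<not> stopG rlx P G T (Suc EN)"
    using alive_Suc[of rlx P G T EN] alive_EN by simp
  show ?case
  proof (cases SS)
    case 0
    then show ?thesis using alive_0[of rlx P G2 T] sp aG by simp
  next
    case (Suc s')
    have "aliveG rlx P G2 T s'" using alive_pre[of s'] Suc alive_mono[OF alive_EN, of s'] SS_eq by simp
    then show ?thesis using alive_Suc[of rlx P G2 T s'] Suc sp aG by simp
  qed
next
  case (Suc d)
  show ?case
  proof (cases "aliveG rlx P G T (Suc EN + d)")
    case True
    have "stopG rlx P G2 T (Suc (SS + d)) \<longleftrightarrow> stopG rlx P G T (Suc (SS + d) + (NN + 1))"
      using stop_post[of "Suc (SS + d)"] True SSNN by (simp add: add.commute add.left_commute)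
    then show ?thesis using alive_Suc[of rlx P G2 T "SS + d"] alive_Suc[of rlx P G T "Suc EN + d"] Suc.IH SSNN
      by (simp add: add.commute add.left_commute)
  next
    case False
    then show ?thesis using alive_Suc[of rlx P G2 T "SS + d"] alive_Suc[of rlx P G T "Suc EN + d"] Suc.IH
      by simp
  qed
qed

lemma alive_ge: "SS \<le> t \<Longrightarrow> aliveG rlx P G2 T t \<longleftrightarrow> aliveG rlx P G T (t + (NN + 1))"
proof -
  assume a: "SS \<le> t"
  have "Suc EN + (t - SS) = t + (NN + 1)" using SSNN a(1) by arith
  then show ?thesis using alive_post[of "t - SS"] a by simp
qed

lemma gE_G3: "(U, t, e) \<in> gE G \<longleftrightarrow> e = eG rlx P G U t \<and> aliveG rlx P G U t"
  using gE_G[of "(U, t, e)"] by auto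

lemma final: "consP rlx P G2"
proof -
  have H: "(U, t, e) \<in> gE G2 \<longleftrightarrow> e = eG rlx P G2 U t \<and> aliveG rlx P G2 U t" for U t e
  proof (cases "U \<noteq> T \<or> t < SS")
    case True
    then have m: "(U, t, e) \<in> gE G2 \<longleftrightarrow> e = eG rlx P G U t \<and> aliveG rlx P G U t"
      using memb_G2[of U t e] gE_G3[of U t e] by simp
    show ?thesis
    proof (cases "U \<noteq> T")
      case True then show ?thesis using m same_oth[OF True] alive_oth[OF True] by simp
    next
      case False
      then have "t < SS" "U = T" using \<open>U \<noteq> T \<or> t < SS\<close> by auto
      then show ?thesis using m same_pre[OF \<open>t < SS\<close>] alive_pre[OF \<open>t < SS\<close>] by simp
    qed
  next
    case False
    then have f: "U = T" "SS \<le> t" by auto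
    then have m: "(U, t, e) \<in> gE G2 \<longleftrightarrow> e = eG rlx P G T (t + (NN + 1)) \<and> aliveG rlx P G T (t + (NN + 1))"
      using memb_G2[of U t e] gE_G3[of T "t + (NN + 1)" e] by simp
    have "aliveG rlx P G2 T t \<longleftrightarrow> aliveG rlx P G T (t + (NN + 1))" using alive_ge[OF f(2)] .
    moreover have "aliveG rlx P G T (t + (NN + 1)) \<Longrightarrow> eG rlx P G2 T t = eG rlx P G T (t + (NN + 1))"
      using step_ge(2)[OF f(2)] .
    ultimately have "(T, t, e) \<in> gE G2 \<longleftrightarrow> e = eG rlx P G2 T t \<and> aliveG rlx P G2 T t"
      using m[unfolded f(1)] by (cases "aliveG rlx P G T (t + (NN + 1))") simp_all
    then show ?thesis using f(1) by simp
  qed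
  show ?thesis unfolding consP_def
  proof (rule set_eqI)
    fix x :: "('t, 'l, 'v, 'm) triple"
    obtain U t e where x: "x = (U, t, e)" by (cases x)
    show "x \<in> gE G2 \<longleftrightarrow> x \<in> {(U, t, eG rlx P G2 U t) | U t. aliveG rlx P G2 U t}"
      unfolding x H by blast
  qed
qed

end


theorem lemma6:
  fixes rlx :: 'm
    and P :: "('t::finite, 'r::finite, 'v::finite, 'l::finite, 'm) prog"
    and G :: "('t, 'l, 'v, 'm) graph"
    and T :: 't and q :: nat
  assumes "wf_prog P"
    and "wf_graph G"
    and "consP rlx P G"
    and "BE rlx P G"
    and "failG rlx P G T q"
  shows "consP rlx P (delete_iter rlx P G T q)"
proof -
  interpret L6 rlx P G T q using assms by unfold_locales
  show ?thesis by (rule final)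
qed

end
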